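(* Let $f\colon\mathbb{R}^k_+\to\operatorname{int}(\mathbb{R}^k_+)$ be continuous and concave with respect to the cone order, and let $U\subset\operatorname{int}(\mathbb{R}^k_+)$ be a compact set containing a nonempty open set. Then $f$ is a local $c$-Lipschitz contraction with respect to Thompson's metric on $U$; that is, there exists $c\in[0,1)$ such that $d_T(f(x),f(y))\le c\, d_T(x,y)$ for all $x,y\in U$.
   Context: $\mathbb{R}^k_+=\{x\in\mathbb{R}^k: x_i\ge 0\ \forall i\}$, $\operatorname{int}(\mathbb{R}^k_+)$ is the set of vectors with all coordinates strictly positive, and $x\le y$ means $y-x\in\mathbb{R}^k_+$. Concavity with respect to the cone order means $f(tx+(1-t)y)\ge tf(x)+(1-t)f(y)$ for all $x,y\in\mathbb{R}^k_+$, $t\in(0,1)$. Thompson's metric on $\operatorname{int}(\mathbb{R}^k_+)$ is $d_T(x,y)=\ln\big(\max\{M(x,y),M(y,x)\}\big)$ with $M(x,y)=\inf\{\beta>0: x\le\beta y\}$. Compactness and continuity refer to the usual topology of $\mathbb{R}^k$ (for subsets of $\operatorname{int}(\mathbb{R}^k_+)$, compactness in the usual topology coincides with compactness in $(\operatorname{int}(\mathbb{R}^k_+),d_T)$). *)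

theory Defs
  imports "HOL-Analysis.Analysis"
begin

definition nonneg_cone :: "(real^'k) set" where
  "nonneg_cone = {x. \<forall>i. x $ i \<ge> 0}"

definition pos_cone :: "(real^'k) set" where
  "pos_cone = {x. \<forall>i. x $ i > 0}"

definition cone_le :: "real^'k \<Rightarrow> real^'k \<Rightarrow> bool" where
  "cone_le x y \<longleftrightarrow> y - x \<in> nonneg_cone"

definition cone_concave_on :: "(real^'k) set \<Rightarrow> (real^'k \<Rightarrow> real^'k) \<Rightarrow> bool" where
  "cone_concave_on S f \<longleftrightarrow>
     (\<forall>x\<in>S. \<forall>y\<in>S. \<forall>t::real. 0 < t \<and> t < 1 \<longrightarrow>
        cone_le (t *\<^sub>R f x + (1 - t) *\<^sub>R f y) (f (t *\<^sub>R x + (1 - t) *\<^sub>R y)))"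

definition M_T :: "real^'k \<Rightarrow> real^'k \<Rightarrow> real" where
  "M_T x y = Inf {\<beta>. \<beta> > 0 \<and> cone_le x (\<beta> *\<^sub>R y)}"

definition thompson_dist :: "real^'k \<Rightarrow> real^'k \<Rightarrow> real" where
  "thompson_dist x y = ln (max (M_T x y) (M_T y x))"

end

theory Submission
  imports Defs
begin

lemma cone_le_iff: "cone_le x y \<longleftrightarrow> (\<forall>i. x$i \<le> y$i)"
  unfolding cone_le_def nonneg_cone_def by auto

lemma M_T_props:
  fixes x y :: "real^'k"
  assumes x: "x \<in> pos_cone" and y: "y \<in> pos_cone"
  shows "M_T x y > 0" "cone_le x (M_T x y *\<^sub>R y)"
    "\<And>\<beta>. \<beta> > 0 \<Longrightarrow> cone_le x (\<beta> *\<^sub>R y) \<Longrightarrow> M_T x y \<le> \<beta>"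
proof -
  define S where "S = {\<beta>. \<beta> > 0 \<and> cone_le x (\<beta> *\<^sub>R y)}"
  have xp: "\<And>i. x$i > 0" and yp: "\<And>i. y$i > 0" using x y by (auto simp: pos_cone_def)
  define B where "B = Max (range (\<lambda>i. x$i / y$i))"
  have Bge: "\<And>i. x$i / y$i \<le> B" unfolding B_def by (intro Max_ge) auto
  obtain i0 :: 'k where True by auto
  have "0 < x$i0 / y$i0" using xp yp by simp
  hence Bpos: "B > 0" using Bge[of i0] by linarith
  have "B \<in> S" unfolding S_def cone_le_iff using Bpos Bge yp
    by (auto simp: pos_divide_le_eq mult.commute)
  hence ne: "S \<noteq> {}" by auto
  have bdd: "bdd_below S" unfolding S_def by (rule bdd_belowI[of _ 0]) auto
  have M: "M_T x y = Inf S" unfolding M_T_def S_def by simp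
  have low: "\<And>i. x$i / y$i \<le> M_T x y"
  proof -
    fix i
    show "x$i / y$i \<le> M_T x y" unfolding M
    proof (rule cInf_greatest[OF ne])
      fix b assume "b \<in> S"
      hence "x$i \<le> b * y$i" unfolding S_def cone_le_iff by auto
      thus "x$i / y$i \<le> b" using yp[of i] by (simp add: divide_le_eq)
    qed
  qed
  show "M_T x y > 0" using low[of i0] \<open>0 < x$i0 / y$i0\<close> by linarith
  show "cone_le x (M_T x y *\<^sub>R y)" unfolding cone_le_iff
    using low yp by (auto simp: divide_le_eq)
  show "\<And>\<beta>. \<beta> > 0 \<Longrightarrow> cone_le x (\<beta> *\<^sub>R y) \<Longrightarrow> M_T x y \<le> \<beta>"
    unfolding M using bdd by (intro cInf_lower) (auto simp: S_def)
qed

lemma mono_f: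
  fixes f :: "real^'k \<Rightarrow> real^'k"
  assumes f_maps: "f ` nonneg_cone \<subseteq> pos_cone"
    and f_conc: "cone_concave_on nonneg_cone f"
    and x: "x \<in> nonneg_cone" and y: "y \<in> nonneg_cone" and le: "cone_le x y"
  shows "cone_le (f x) (f y)"
  unfolding cone_le_iff
proof
  fix i
  have key: "(1 - e) * f x $ i \<le> f y $ i" if e: "0 < e" "e < 1" for e
  proof -
    define z where "z = x + (1/e) *\<^sub>R (y - x)"
    have z: "z \<in> nonneg_cone" using x le e unfolding z_def nonneg_cone_def cone_le_def
      by auto
    have yz: "e *\<^sub>R z + (1 - e) *\<^sub>R x = y" unfolding z_def using e
      by (simp add: algebra_simps)
    have "cone_le (e *\<^sub>R f z + (1 - e) *\<^sub>R f x) (f (e *\<^sub>R z + (1 - e) *\<^sub>R x))"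
      using f_conc z x e unfolding cone_concave_on_def by blast
    hence "e * f z $ i + (1 - e) * f x $ i \<le> f y $ i" unfolding yz cone_le_iff by auto
    moreover have "f z $ i > 0" using f_maps z unfolding pos_cone_def by auto
    ultimately show ?thesis using e by (smt (verit) mult_pos_pos)
  qed
  show "f x $ i \<le> f y $ i"
  proof (rule ccontr)
    assume "\<not> f x $ i \<le> f y $ i"
    hence d: "f x $ i - f y $ i > 0" by simp
    have fxp: "f x $ i > 0" using f_maps x unfolding pos_cone_def by auto
    define e where "e = min (1/2) ((f x $ i - f y $ i) / (2 * f x $ i))"
    have e: "0 < e" "e < 1" unfolding e_def using d fxp by auto
    have "e * f x $ i < f x $ i - f y $ i"
    proof -
      have "e * f x $ i \<le> ((f x $ i - f y $ i) / (2 * f x $ i)) * f x $ i"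
        unfolding e_def using fxp by (intro mult_right_mono) auto
      also have "\<dots> = (f x $ i - f y $ i) / 2" using fxp by simp
      finally have "e * f x $ i \<le> (f x $ i - f y $ i) / 2" .
      moreover have "(f x $ i - f y $ i) / 2 < f x $ i - f y $ i" using d by simp
      ultimately show ?thesis by (rule le_less_trans)
    qed
    thus False using key[OF e] by (simp add: algebra_simps)
  qed
qed

lemma ln_ineq:
  fixes t d :: real
  assumes "0 < t" "t \<le> 1" "0 < d" "d < 1"
  shows "(1 - d) * ln t \<le> ln (t + (1 - t) * d)"
proof -
  have "(1 - d) * ln t + d * ln 1 \<le> ln ((1 - d) *\<^sub>R t + d *\<^sub>R 1)"
    using concave_onD[OF ln_concave, of d t 1] assms by auto
  moreover have "(1 - d) *\<^sub>R t + d *\<^sub>R 1 = t + (1 - t) * d" by (simp add: algebra_simps)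
  ultimately show ?thesis by simp
qed

theorem proposition1:
  fixes f :: "real^'k \<Rightarrow> real^'k" and U :: "(real^'k) set"
  assumes f_maps: "f ` nonneg_cone \<subseteq> pos_cone"
    and f_cont: "continuous_on nonneg_cone f"
    and f_conc: "cone_concave_on nonneg_cone f"
    and U_sub: "U \<subseteq> pos_cone"
    and U_compact: "compact U"
    and U_open: "\<exists>V. open V \<and> V \<noteq> {} \<and> V \<subseteq> U"
  shows "\<exists>c::real. 0 \<le> c \<and> c < 1 \<and>
           (\<forall>x\<in>U. \<forall>y\<in>U. thompson_dist (f x) (f y) \<le> c * thompson_dist x y)"
proof -
  have pn: "pos_cone \<subseteq> nonneg_cone" unfolding pos_cone_def nonneg_cone_def
    by (auto intro: less_imp_le)
  have Un: "U \<subseteq> nonneg_cone" using U_sub pn by auto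
  have zero: "(0::real^'k) \<in> nonneg_cone" unfolding nonneg_cone_def by simp
  have "compact (f ` U)"
    by (rule compact_continuous_image[OF continuous_on_subset[OF f_cont Un] U_compact])
  then obtain B where B: "\<And>y. y \<in> U \<Longrightarrow> norm (f y) \<le> B"
    using compact_imp_bounded bounded_iff by (metis imageI)
  have fyB: "\<And>y i. y \<in> U \<Longrightarrow> f y $ i \<le> max B 1"
    using B component_le_norm_cart by (smt (verit))
  define m where "m = Min (range (\<lambda>i. f 0 $ i))"
  have f0p: "\<And>i. f 0 $ i > 0" using f_maps zero unfolding pos_cone_def by auto
  have mle: "\<And>i. m \<le> f 0 $ i" unfolding m_def by (intro Min_le) auto
  have mpos: "m > 0" unfolding m_def using f0p by (subst Min_gr_iff) auto
  define d where "d = min (1/2) (m / max B 1)"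
  have d: "0 < d" "d < 1" unfolding d_def using mpos by auto
  have dle: "\<And>y i. y \<in> U \<Longrightarrow> d * f y $ i \<le> f 0 $ i"
  proof -
    fix y i assume y: "y \<in> U"
    have "d * f y $ i \<le> (m / max B 1) * max B 1"
    proof -
      have "f y $ i > 0" using f_maps y Un unfolding pos_cone_def by auto
      thus ?thesis unfolding d_def using fyB[OF y, of i] mpos
        by (intro mult_mono) auto
    qed
    also have "\<dots> = m" by simp
    finally show "d * f y $ i \<le> f 0 $ i" using mle[of i] by linarith
  qed
  have half: "M_T (f y) (f x) \<le> 1 / (t + (1 - t) * d)"
    if x: "x \<in> U" and y: "y \<in> U" and t: "0 < t" "t \<le> 1" and xy: "cone_le (t *\<^sub>R y) x"
    for x y t
  proof -
    have xn: "x \<in> nonneg_cone" and yn: "y \<in> nonneg_cone" using x y Un by auto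
    have tyn: "t *\<^sub>R y \<in> nonneg_cone" using yn t unfolding nonneg_cone_def by auto
    have m1: "cone_le (f (t *\<^sub>R y)) (f x)" by (rule mono_f[OF f_maps f_conc tyn xn xy])
    have m2: "cone_le (t *\<^sub>R f y + (1 - t) *\<^sub>R f 0) (f (t *\<^sub>R y))"
    proof (cases "t = 1")
      case True thus ?thesis by (simp add: cone_le_iff)
    next
      case False
      hence "t < 1" using t by simp
      hence "cone_le (t *\<^sub>R f y + (1 - t) *\<^sub>R f 0) (f (t *\<^sub>R y + (1 - t) *\<^sub>R 0))"
        using f_conc yn zero t unfolding cone_concave_on_def by blast
      thus ?thesis by simp
    qed
    define g where "g = t + (1 - t) * d"
    have gpos: "g > 0" unfolding g_def using t d by (smt (verit) mult_nonneg_nonneg)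
    have "cone_le (f y) ((1/g) *\<^sub>R f x)"
      unfolding cone_le_iff
    proof
      fix i
      have "(1 - t) * (d * f y $ i) \<le> (1 - t) * f 0 $ i"
        using dle[OF y, of i] t by (intro mult_left_mono) auto
      moreover have "t * f y $ i + (1 - t) * f 0 $ i \<le> f (t *\<^sub>R y) $ i"
        using m2 unfolding cone_le_iff by (metis vector_add_component vector_scaleR_component scaleR_conv_of_real of_real_def real_scaleR_def)
      moreover have "f (t *\<^sub>R y) $ i \<le> f x $ i" using m1 unfolding cone_le_iff by blast
      ultimately have "g * f y $ i \<le> f x $ i"
        unfolding g_def by (simp add: algebra_simps)
      thus "f y $ i \<le> ((1/g) *\<^sub>R f x) $ i" using gpos by (simp add: field_simps)
    qed
    moreover have "f x \<in> pos_cone" "f y \<in> pos_cone" using f_maps xn yn by auto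
    ultimately show ?thesis unfolding g_def[symmetric]
      using M_T_props(3)[of "f y" "f x" "1/g"] gpos by auto
  qed
  show ?thesis
  proof (intro exI[of _ "1 - d"] conjI ballI)
    show "0 \<le> 1 - d" "1 - d < 1" using d by auto
  next
    fix x y assume x: "x \<in> U" and y: "y \<in> U"
    have xp: "x \<in> pos_cone" and yp: "y \<in> pos_cone" using x y U_sub by auto
    define a where "a = M_T x y"
    define b where "b = M_T y x"
    have a: "a > 0" "cone_le x (a *\<^sub>R y)" using M_T_props[OF xp yp] a_def by auto
    have b: "b > 0" "cone_le y (b *\<^sub>R x)" using M_T_props[OF yp xp] b_def by auto
    define mm where "mm = max a b"
    have mm1: "mm \<ge> 1"
    proof -
      obtain i :: 'k where True by auto
      have xi: "x$i > 0" using xp unfolding pos_cone_def by auto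
      have "x$i \<le> a * y$i" "y$i \<le> b * x$i" using a b unfolding cone_le_iff by auto
      hence "x$i \<le> a * b * x$i" using a by (smt (verit) mult_left_mono mult.assoc)
      hence "1 \<le> a * b" using xi by simp
      show ?thesis
      proof (rule ccontr)
        assume "\<not> 1 \<le> mm"
        hence "a < 1" "b < 1" unfolding mm_def by auto
        hence "a * b < 1 * 1" using a(1) b(1) by (intro mult_strict_mono) auto
        thus False using \<open>1 \<le> a * b\<close> by simp
      qed
    qed
    define t where "t = 1 / mm"
    have t: "0 < t" "t \<le> 1" unfolding t_def using mm1 by auto
    have c1: "cone_le (t *\<^sub>R y) x"
      unfolding cone_le_iff
    proof
      fix i
      have "y$i \<le> b * x$i" using b unfolding cone_le_iff by auto
      also have "\<dots> \<le> mm * x$i" using xp unfolding mm_def pos_cone_def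
        by (intro mult_right_mono) (auto intro: less_imp_le)
      finally show "(t *\<^sub>R y) $ i \<le> x $ i" using mm1 unfolding t_def
        by (simp add: field_simps)
    qed
    have c2: "cone_le (t *\<^sub>R x) y"
      unfolding cone_le_iff
    proof
      fix i
      have "x$i \<le> a * y$i" using a unfolding cone_le_iff by auto
      also have "\<dots> \<le> mm * y$i" using yp unfolding mm_def pos_cone_def
        by (intro mult_right_mono) (auto intro: less_imp_le)
      finally show "(t *\<^sub>R x) $ i \<le> y $ i" using mm1 unfolding t_def
        by (simp add: field_simps)
    qed
    define g where "g = t + (1 - t) * d"
    have gpos: "g > 0" unfolding g_def using t d by (smt (verit) mult_nonneg_nonneg)
    have h1: "M_T (f y) (f x) \<le> 1/g" using half[OF x y t c1] g_def by simp
    have h2: "M_T (f x) (f y) \<le> 1/g" using half[OF y x t c2] g_def by simp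
    have fp: "f x \<in> pos_cone" "f y \<in> pos_cone" using f_maps xp yp pn by auto
    have p1: "M_T (f x) (f y) > 0" "M_T (f y) (f x) > 0"
      using M_T_props(1) fp by auto
    have "thompson_dist (f x) (f y) \<le> ln (1/g)"
      unfolding thompson_dist_def
    proof -
      have "max (M_T (f x) (f y)) (M_T (f y) (f x)) \<le> 1/g" using h1 h2 by simp
      moreover have "0 < max (M_T (f x) (f y)) (M_T (f y) (f x))" using p1 by simp
      ultimately show "ln (max (M_T (f x) (f y)) (M_T (f y) (f x))) \<le> ln (1/g)"
        using gpos by (subst ln_le_cancel_iff) auto
    qed
    also have "\<dots> = - ln g" using gpos by (simp add: ln_div)
    also have "\<dots> \<le> - ((1 - d) * ln t)" using ln_ineq[OF t d] g_def by simp
    also have "\<dots> = (1 - d) * ln mm" unfolding t_def using mm1 by (simp add: ln_div)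
    also have "\<dots> = (1 - d) * thompson_dist x y"
      unfolding thompson_dist_def mm_def a_def b_def by simp
    finally show "thompson_dist (f x) (f y) \<le> (1 - d) * thompson_dist x y" .
  qed
qed

end
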